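(* Let $(A,\gamma)$ be a quasiordered set, $(X,\rho)$ a partially ordered set, and $f:A\to X$ a map such that for all $x,y\in A$, $(x,y)\in\gamma$ if and only if $(f(x),f(y))\in\rho$. Let $(X_1^{(i)})_{i\in I}$ be subsets of $X$ with $\gamma\cap\ker(f)\subseteq\ker_{X_1^{(i)}}(f)$ for all $i\in I$, and let $\{R_i\mid i\in I\}$ be linear extensions of $\rho$ with $\bigcap_{i\in I}R_i=\rho$. Then $$\bigcap_{i\in I}\bigl(\ker_{X_1^{(i)}}(f)\cup f^{-1}(R_i)\bigr)=\gamma,$$ and each $\ker_{X_1^{(i)}}(f)\cup f^{-1}(R_i)$ is a half-space on $A$. In particular, if $\kappa:A\to A/(\gamma\cap\gamma^{-1})$ is the canonical surjection and $\{R_i\mid i\in I\}$ are linear extensions of $r_\gamma$ with $\bigcap_{i\in I}R_i=r_\gamma$, then $\bigcap_{i\in I}\bigl((\gamma\cap\gamma^{-1})\cup\kappa^{-1}(R_i)\bigr)=\gamma$.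
   Context: A quasiorder on $A$ is a reflexive and transitive relation; $\Delta_A=\{(a,a)\mid a\in A\}$. A quasiorder $\alpha$ on $A$ is a half-space if there is a quasiorder $\beta$ on $A$ with $\alpha\cup\beta=A\times A$ and $\alpha\cap\beta=\Delta_A$. For $f:A\to X$, $X_1\subseteq X$ and a linear order $R$ on $X$ (strict part $<_R$): $\ker(f)=\{(a,b)\mid f(a)=f(b)\}$, $\ker_{X_1}(f)=\Delta_A\cup\{(a,b)\mid f(a)=f(b)\in X_1\}$, $f^{-1}(R)=\Delta_A\cup\{(a,b)\mid f(a)<_Rf(b)\}$. For a quasiorder $\gamma$, $r_\gamma$ is the induced partial order on $A/(\gamma\cap\gamma^{-1})$: $([a],[b])\in r_\gamma$ iff $(a,b)\in\gamma$. *)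

theory Defs
  imports Main
begin

text \<open>Quasiorders/partial orders/linear orders on the whole carrier type use the library
  notions preorder_on UNIV, partial_order_on UNIV, linear_order_on UNIV. Delta_A is Id.\<close>

definition half_space :: "'a rel \<Rightarrow> bool" where
  "half_space \<alpha> \<longleftrightarrow> preorder_on UNIV \<alpha> \<and>
     (\<exists>\<beta>. preorder_on UNIV \<beta> \<and> \<alpha> \<union> \<beta> = UNIV \<and> \<alpha> \<inter> \<beta> = Id)"

definition kerf :: "('a \<Rightarrow> 'b) \<Rightarrow> 'a rel" where
  "kerf f = {(a, b). f a = f b}"

definition ker_on :: "'b set \<Rightarrow> ('a \<Rightarrow> 'b) \<Rightarrow> 'a rel" where
  "ker_on X1 f = Id \<union> {(a, b). f a = f b \<and> f a \<in> X1}"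

definition preim :: "('a \<Rightarrow> 'b) \<Rightarrow> 'b rel \<Rightarrow> 'a rel" where
  "preim f R = Id \<union> {(a, b). (f a, f b) \<in> R \<and> f a \<noteq> f b}"

definition canon :: "'a rel \<Rightarrow> 'a \<Rightarrow> 'a set" where
  "canon \<gamma> a = (\<gamma> \<inter> \<gamma>\<inverse>) `` {a}"

definition induced_order :: "'a rel \<Rightarrow> 'a set rel" where
  "induced_order \<gamma> = {(canon \<gamma> a, canon \<gamma> b) | a b. (a, b) \<in> \<gamma>}"

end

theory Submission
  imports Defs
begin

lemma canon_eq:
  assumes "preorder_on UNIV g"
  shows "canon g a = canon g b \<longleftrightarrow> (a, b) \<in> g \<and> (b, a) \<in> g"
proof -
  have r: "\<And>x. (x,x) \<in> g" and t: "trans g" using assms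
    unfolding preorder_on_def refl_on_def by auto
  show ?thesis
  proof
    assume "canon g a = canon g b"
    moreover have "b \<in> canon g b" using r unfolding canon_def by auto
    ultimately show "(a, b) \<in> g \<and> (b, a) \<in> g" unfolding canon_def by auto
  next
    assume "(a, b) \<in> g \<and> (b, a) \<in> g"
    then show "canon g a = canon g b" using t unfolding canon_def
      by (auto dest: transD)
  qed
qed

lemma induced_mem:
  assumes "preorder_on UNIV g"
  shows "(canon g a, canon g b) \<in> induced_order g \<longleftrightarrow> (a, b) \<in> g"
proof
  have t: "trans g" using assms unfolding preorder_on_def by auto
  assume "(canon g a, canon g b) \<in> induced_order g"
  then obtain a' b' where "canon g a = canon g a'" "canon g b = canon g b'" "(a', b') \<in> g"
    unfolding induced_order_def by auto
  then show "(a, b) \<in> g" using canon_eq[OF assms] t by (meson transD)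
qed (auto simp: induced_order_def)

lemma canon_in_quot: "canon g a \<in> UNIV // (g \<inter> g\<inverse>)"
  unfolding canon_def quotient_def by auto

theorem proposition2p8:
  fixes \<gamma> :: "'a rel" and \<rho> :: "'b rel" and f :: "'a \<Rightarrow> 'b"
    and I :: "'i set" and X1 :: "'i \<Rightarrow> 'b set" and R :: "'i \<Rightarrow> 'b rel"
  assumes "preorder_on UNIV \<gamma>"
    and "partial_order_on UNIV \<rho>"
    and "\<And>x y. (x, y) \<in> \<gamma> \<longleftrightarrow> (f x, f y) \<in> \<rho>"
    and "\<And>i. i \<in> I \<Longrightarrow> \<gamma> \<inter> kerf f \<subseteq> ker_on (X1 i) f"
    and "\<And>i. i \<in> I \<Longrightarrow> linear_order_on UNIV (R i) \<and> \<rho> \<subseteq> R i"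
    and "(\<Inter>i\<in>I. R i) = \<rho>"
  shows "(\<Inter>i\<in>I. ker_on (X1 i) f \<union> preim f (R i)) = \<gamma>
    \<and> (\<forall>i\<in>I. half_space (ker_on (X1 i) f \<union> preim f (R i)))
    \<and> (\<forall>(J :: 'j set) (S :: 'j \<Rightarrow> 'a set rel).
         (\<forall>j\<in>J. linear_order_on (UNIV // (\<gamma> \<inter> \<gamma>\<inverse>)) (S j) \<and> induced_order \<gamma> \<subseteq> S j)
         \<and> ((UNIV // (\<gamma> \<inter> \<gamma>\<inverse>)) \<times> (UNIV // (\<gamma> \<inter> \<gamma>\<inverse>))) \<inter> (\<Inter>j\<in>J. S j) = induced_order \<gamma>
       \<longrightarrow> (\<Inter>j\<in>J. (\<gamma> \<inter> \<gamma>\<inverse>) \<union> preim (canon \<gamma>) (S j)) = \<gamma>)"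
proof -
  have gr: "\<And>x. (x,x) \<in> \<gamma>" and gt: "trans \<gamma>" using assms(1)
    unfolding preorder_on_def refl_on_def by auto
  have rr: "\<And>x. (x,x) \<in> \<rho>" using assms(2)
    unfolding partial_order_on_def preorder_on_def refl_on_def by auto
  have kg: "\<And>a b. f a = f b \<Longrightarrow> (a, b) \<in> \<gamma>" using assms(3) rr by auto
  have fib: "\<And>i a b. i \<in> I \<Longrightarrow> f a = f b \<Longrightarrow> a \<noteq> b \<Longrightarrow> f a \<in> X1 i"
  proof -
    fix i a b assume "i \<in> I" "f a = f b" "a \<noteq> b"
    then have "(a,b) \<in> ker_on (X1 i) f" using assms(4)[of i] kg unfolding kerf_def by auto
    then show "f a \<in> X1 i" using \<open>a \<noteq> b\<close> unfolding ker_on_def by auto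
  qed
  have Rp: "\<And>i. i \<in> I \<Longrightarrow> (\<forall>x. (x,x) \<in> R i) \<and> trans (R i) \<and> antisym (R i) \<and>
      (\<forall>x y. (x,y) \<in> R i \<or> (y,x) \<in> R i) \<and> \<rho> \<subseteq> R i"
  proof -
    fix i assume "i \<in> I"
    from assms(5)[OF this] have L: "linear_order_on UNIV (R i)" and s: "\<rho> \<subseteq> R i" by auto
    have "refl_on UNIV (R i)" "trans (R i)" "antisym (R i)"
      using partial_order_onD L unfolding linear_order_on_def by blast+
    moreover have "total_on UNIV (R i)" using L unfolding linear_order_on_def by blast
    ultimately show "?thesis i" using s unfolding refl_on_def total_on_def by (intro conjI allI; metis UNIV_I)
  qed
  show ?thesis
  proof (intro conjI allI impI ballI)
  show "(\<Inter>i\<in>I. ker_on (X1 i) f \<union> preim f (R i)) = \<gamma>"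
  proof
    show "\<gamma> \<subseteq> (\<Inter>i\<in>I. ker_on (X1 i) f \<union> preim f (R i))"
    proof (intro subsetI INT_I)
      fix p i assume "p \<in> \<gamma>" and i: "i \<in> I"
      obtain a b where pab: "p = (a,b)" by (cases p)
      with \<open>p \<in> \<gamma>\<close> have ab: "(a,b) \<in> \<gamma>" by simp
      have "(a, b) \<in> ker_on (X1 i) f \<union> preim f (R i)"
      proof (cases "f a = f b")
        case True
        then show ?thesis using fib[OF i True] unfolding ker_on_def by (cases "a = b") auto
      next
        case False
        then show ?thesis using ab assms(3) Rp[OF i] unfolding preim_def by auto
      qed
      then show "p \<in> ker_on (X1 i) f \<union> preim f (R i)" using pab by simp
    qed
  next
    show "(\<Inter>i\<in>I. ker_on (X1 i) f \<union> preim f (R i)) \<subseteq> \<gamma>"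
    proof (rule subsetI)
      fix p assume "p \<in> (\<Inter>i\<in>I. ker_on (X1 i) f \<union> preim f (R i))"
      obtain a b where pab: "p = (a,b)" by (cases p)
      with \<open>p \<in> _\<close> have H: "\<forall>i\<in>I. (a,b) \<in> ker_on (X1 i) f \<union> preim f (R i)" by simp
      have "(a, b) \<in> \<gamma>"
      proof (cases "f a = f b")
        case True then show ?thesis using kg by auto
      next
        case False
        have "(f a, f b) \<in> (\<Inter>i\<in>I. R i)"
          using H False unfolding ker_on_def preim_def by auto
        then show ?thesis using assms(3,6) by auto
      qed
      then show "p \<in> \<gamma>" using pab by simp
    qed
  qed
next
  fix i assume i: "i \<in> I"
  note P = Rp[OF i]
  have Rt: "\<And>x y z. (x,y) \<in> R i \<Longrightarrow> (y,z) \<in> R i \<Longrightarrow> (x,z) \<in> R i"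
    using P by (meson transD)
  have Ra: "\<And>x y. (x,y) \<in> R i \<Longrightarrow> (y,x) \<in> R i \<Longrightarrow> x = y"
    using P by (meson antisymD)
  have Rtot: "\<And>x y. (x,y) \<in> R i \<or> (y,x) \<in> R i" using P by blast
  define \<alpha> where "\<alpha> = ker_on (X1 i) f \<union> preim f (R i)"
  define \<beta> where "\<beta> = Id \<union> {(a, b). (f b, f a) \<in> R i \<and> f a \<noteq> f b}"
  have \<alpha>: "\<And>a b. (a,b) \<in> \<alpha> \<longleftrightarrow> f a = f b \<or> ((f a, f b) \<in> R i \<and> f a \<noteq> f b)"
    using fib[OF i] unfolding \<alpha>_def ker_on_def preim_def by auto
  have \<beta>: "\<And>a b. (a,b) \<in> \<beta> \<longleftrightarrow> a = b \<or> ((f b, f a) \<in> R i \<and> f a \<noteq> f b)"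
    unfolding \<beta>_def by auto
  have "preorder_on UNIV \<alpha>"
    unfolding preorder_on_def refl_on_def
  proof (intro conjI)
    show "trans \<alpha>"
    proof (rule transI)
      fix x y z assume "(x,y) \<in> \<alpha>" "(y,z) \<in> \<alpha>"
      then show "(x,z) \<in> \<alpha>" unfolding \<alpha> using Rt Ra by metis
    qed
  qed (auto simp: \<alpha>)
  moreover have "preorder_on UNIV \<beta>"
    unfolding preorder_on_def refl_on_def
  proof (intro conjI)
    show "trans \<beta>"
    proof (rule transI)
      fix x y z assume "(x,y) \<in> \<beta>" "(y,z) \<in> \<beta>"
      then show "(x,z) \<in> \<beta>" unfolding \<beta> using Rt Ra by metis
    qed
  qed (auto simp: \<beta>)
  moreover have "\<alpha> \<union> \<beta> = UNIV" using Rtot by (auto simp: \<alpha> \<beta>) (metis Rtot)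
  moreover have "\<alpha> \<inter> \<beta> = Id"
  proof (intro equalityI subsetI)
    fix p assume "p \<in> \<alpha> \<inter> \<beta>"
    then obtain a b where p: "p = (a,b)" "(a,b) \<in> \<alpha>" "(a,b) \<in> \<beta>" by (cases p) auto
    then show "p \<in> Id" unfolding \<alpha> \<beta> using Ra by auto
  qed (auto simp: \<alpha> \<beta>)
  ultimately show "half_space (ker_on (X1 i) f \<union> preim f (R i))"
    unfolding half_space_def \<alpha>_def by blast
next
  fix J :: "'j set" and S :: "'j \<Rightarrow> 'a set rel"
  assume H: "(\<forall>j\<in>J. linear_order_on (UNIV // (\<gamma> \<inter> \<gamma>\<inverse>)) (S j) \<and> induced_order \<gamma> \<subseteq> S j)
         \<and> ((UNIV // (\<gamma> \<inter> \<gamma>\<inverse>)) \<times> (UNIV // (\<gamma> \<inter> \<gamma>\<inverse>))) \<inter> (\<Inter>j\<in>J. S j) = induced_order \<gamma>"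
  have gr: "\<And>x. (x,x) \<in> \<gamma>" using assms(1)
    unfolding preorder_on_def refl_on_def by auto
  show "(\<Inter>j\<in>J. (\<gamma> \<inter> \<gamma>\<inverse>) \<union> preim (canon \<gamma>) (S j)) = \<gamma>"
  proof
    show "\<gamma> \<subseteq> (\<Inter>j\<in>J. (\<gamma> \<inter> \<gamma>\<inverse>) \<union> preim (canon \<gamma>) (S j))"
    proof (intro subsetI INT_I)
      fix p j assume "p \<in> \<gamma>" and j: "j \<in> J"
      obtain a b where pab: "p = (a,b)" by (cases p)
      with \<open>p \<in> \<gamma>\<close> have ab: "(a,b) \<in> \<gamma>" by simp
      have sub: "induced_order \<gamma> \<subseteq> S j" using H j by blast
      have "(canon \<gamma> a, canon \<gamma> b) \<in> induced_order \<gamma>" using induced_mem[OF assms(1)] ab by blast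
      then have "(canon \<gamma> a, canon \<gamma> b) \<in> S j" using sub by blast
      then have "(a, b) \<in> (\<gamma> \<inter> \<gamma>\<inverse>) \<union> preim (canon \<gamma>) (S j)"
        using canon_eq[OF assms(1), of a b] ab unfolding preim_def by auto
      then show "p \<in> (\<gamma> \<inter> \<gamma>\<inverse>) \<union> preim (canon \<gamma>) (S j)" using pab by simp
    qed
  next
    show "(\<Inter>j\<in>J. (\<gamma> \<inter> \<gamma>\<inverse>) \<union> preim (canon \<gamma>) (S j)) \<subseteq> \<gamma>"
    proof (rule subsetI)
      fix p assume "p \<in> (\<Inter>j\<in>J. (\<gamma> \<inter> \<gamma>\<inverse>) \<union> preim (canon \<gamma>) (S j))"
      obtain a b where pab: "p = (a,b)" by (cases p)
      with \<open>p \<in> _\<close> have K: "\<forall>j\<in>J. (a,b) \<in> (\<gamma> \<inter> \<gamma>\<inverse>) \<union> preim (canon \<gamma>) (S j)" by simp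
      have "(a, b) \<in> \<gamma>"
      proof (cases "(a,b) \<in> \<gamma> \<inter> \<gamma>\<inverse> \<or> a = b")
        case True then show ?thesis using gr by auto
      next
        case False
        then have "\<forall>j\<in>J. (canon \<gamma> a, canon \<gamma> b) \<in> S j" using K unfolding preim_def by auto
        moreover have eq: "((UNIV // (\<gamma> \<inter> \<gamma>\<inverse>)) \<times> (UNIV // (\<gamma> \<inter> \<gamma>\<inverse>))) \<inter> (\<Inter>j\<in>J. S j) = induced_order \<gamma>"
          using H by (rule conjunct2)
        ultimately have "(canon \<gamma> a, canon \<gamma> b) \<in> induced_order \<gamma>"
          using canon_in_quot[of \<gamma>] by (simp add: eq[symmetric])
        then show ?thesis using induced_mem[OF assms(1)] by auto
      qed
      then show "p \<in> \<gamma>" using pab by simp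
    qed
  qed
qed
qed

end
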